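(* Let $f:X\to X$ be a piecewise contracting map on a compact, locally connected metric space $(X,d)$ with continuity pieces $X_1,\dots,X_N$, discontinuity set $\Delta$ and attractor $\Lambda$. If $\Delta=\emptyset$ or $d(\Lambda,\Delta)\neq0$, then there exists $n_0\ge1$ such that for every atom $A$ of generation $n\ge n_0$ there is $i\in\{1,\dots,N\}$ with $A\subset X_i$.
   Context: A map $f:X\to X$ on a compact, locally connected metric space $(X,d)$ is piecewise contracting if there are $N\ge2$ non-empty, pairwise disjoint open sets $X_1,\dots,X_N$ with $X=\bigcup_i\overline{X_i}$, a constant $\lambda\in(0,1)$ with $d(f(x),f(y))\le\lambda d(x,y)$ for all $x,y$ in the same $X_i$, and such that $\tilde X:=\bigcap_{n\ge0}f^{-n}(X\setminus\Delta)\neq\emptyset$, where $\Delta:=X\setminus\bigcup_iX_i$ ($f$ is arbitrary on $\Delta$). For $A\subset X$ let $F_i(A):=\overline{f(A\cap X_i)}$; an atom of generation $n\ge1$ is a set $F_{i_n}\circ\cdots\circ F_{i_1}(X)$ with $i_1,\dots,i_n\in\{1,\dots,N\}$; $\Lambda_n$ is the union of all atoms of generation $n$ and the attractor is $\Lambda:=\bigcap_{n\ge1}\Lambda_n$. Here $d(\Lambda,\Delta)=\inf\{d(x,y):x\in\Lambda,y\in\Delta\}$. *)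

theory Defs
  imports "HOL-Analysis.Analysis"
begin

definition disc_set :: "'a set \<Rightarrow> (nat \<Rightarrow> 'a set) \<Rightarrow> nat \<Rightarrow> 'a set" where
  "disc_set X Xs N = X - (\<Union>i\<in>{1..N}. Xs i)"

definition piecewise_contracting ::
  "'a::metric_space set \<Rightarrow> ('a \<Rightarrow> 'a) \<Rightarrow> (nat \<Rightarrow> 'a set) \<Rightarrow> nat \<Rightarrow> real \<Rightarrow> bool" where
  "piecewise_contracting X f Xs N lam \<longleftrightarrow>
     compact X \<and> locally connected X \<and> f ` X \<subseteq> X \<and> N \<ge> 2 \<and>
     (\<forall>i\<in>{1..N}. Xs i \<noteq> {} \<and> openin (top_of_set X) (Xs i)) \<and>
     (\<forall>i\<in>{1..N}. \<forall>j\<in>{1..N}. i \<noteq> j \<longrightarrow> Xs i \<inter> Xs j = {}) \<and>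
     X = (\<Union>i\<in>{1..N}. closure (Xs i)) \<and>
     0 < lam \<and> lam < 1 \<and>
     (\<forall>i\<in>{1..N}. \<forall>x\<in>Xs i. \<forall>y\<in>Xs i. dist (f x) (f y) \<le> lam * dist x y) \<and>
     (\<Inter>n. X \<inter> (f ^^ n) -` (X - disc_set X Xs N)) \<noteq> {}"

definition Fmap :: "('a::topological_space \<Rightarrow> 'a) \<Rightarrow> (nat \<Rightarrow> 'a set) \<Rightarrow> nat \<Rightarrow> 'a set \<Rightarrow> 'a set" where
  "Fmap f Xs i A = closure (f ` (A \<inter> Xs i))"

text \<open>Atom of generation n: F_{i_n} \<circ> ... \<circ> F_{i_1} (X), the list is = [i_1,...,i_n].\<close>
definition is_atom ::
  "'a::topological_space set \<Rightarrow> ('a \<Rightarrow> 'a) \<Rightarrow> (nat \<Rightarrow> 'a set) \<Rightarrow> nat \<Rightarrow> nat \<Rightarrow> 'a set \<Rightarrow> bool" where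
  "is_atom X f Xs N n A \<longleftrightarrow>
     (\<exists>is. length is = n \<and> set is \<subseteq> {1..N} \<and> A = foldl (\<lambda>B i. Fmap f Xs i B) X is)"

definition Lambda_n :: "'a::topological_space set \<Rightarrow> ('a \<Rightarrow> 'a) \<Rightarrow> (nat \<Rightarrow> 'a set) \<Rightarrow> nat \<Rightarrow> nat \<Rightarrow> 'a set" where
  "Lambda_n X f Xs N n = \<Union>{A. is_atom X f Xs N n A}"

definition attractor :: "'a::topological_space set \<Rightarrow> ('a \<Rightarrow> 'a) \<Rightarrow> (nat \<Rightarrow> 'a set) \<Rightarrow> nat \<Rightarrow> 'a set" where
  "attractor X f Xs N = (\<Inter>n\<in>{1..}. Lambda_n X f Xs N n)"

end

theory Submission imports Defs begin

abbreviation "AF f Xs B is \<equiv> foldl (\<lambda>B i. Fmap f Xs i B) B is"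

lemma AF_sub: "B \<subseteq> X \<Longrightarrow> closed X \<Longrightarrow> f ` X \<subseteq> X \<Longrightarrow> AF f Xs B is \<subseteq> X"
proof (induction "is" arbitrary: B)
  case (Cons i "is")
  have "Fmap f Xs i B \<subseteq> X" unfolding Fmap_def using Cons.prems
    by (meson closure_minimal image_mono inf.coboundedI1 order_trans)
  then show ?case using Cons by simp
qed simp

lemma AF_closed: "closed B \<Longrightarrow> closed (AF f Xs B is)"
  by (induction "is" arbitrary: B) (auto simp: Fmap_def)

lemma AF_mono: "B \<subseteq> C \<Longrightarrow> AF f Xs B is \<subseteq> AF f Xs C is"
proof (induction "is" arbitrary: B C)
  case (Cons i "is")
  have "Fmap f Xs i B \<subseteq> Fmap f Xs i C" unfolding Fmap_def using Cons.prems
    by (intro closure_mono image_mono) auto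
  then show ?case using Cons by simp
qed simp

lemma diam_le_metric:
  fixes S :: "'a::metric_space set"
  assumes "0 \<le> d" "\<forall>x\<in>S. \<forall>y\<in>S. dist x y \<le> d"
  shows "diameter S \<le> d"
  using assms unfolding diameter_def by (auto intro!: cSUP_least)

lemma AF_diam:
  fixes X :: "'a::metric_space set"
  assumes "B \<subseteq> X" "bounded X" "closed X" "f ` X \<subseteq> X" "0 \<le> lam"
    "\<forall>i\<in>{1..N}. \<forall>x\<in>Xs i. \<forall>y\<in>Xs i. dist (f x) (f y) \<le> lam * dist x y"
    "set is \<subseteq> {1..N}"
  shows "diameter (AF f Xs B is) \<le> lam ^ length is * diameter B"
  using assms(1,7)
proof (induction "is" arbitrary: B)
  case (Cons i "is")
  have sub: "Fmap f Xs i B \<subseteq> X" using AF_sub[of B X f Xs "[i]"] Cons.prems assms by simp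
  have bB: "bounded B" using bounded_subset[OF assms(2) Cons.prems(1)] .
  have iN: "i \<in> {1..N}" using Cons.prems by simp
  have "f ` (B \<inter> Xs i) \<subseteq> X" using Cons.prems(1) assms(4) by blast
  then have bI: "bounded (f ` (B \<inter> Xs i))" using bounded_subset[OF assms(2)] by blast
  have "diameter (Fmap f Xs i B) = diameter (f ` (B \<inter> Xs i))"
    unfolding Fmap_def using bI diameter_closure by blast
  also have "\<dots> \<le> lam * diameter B"
  proof (rule diam_le_metric)
    show "0 \<le> lam * diameter B" using assms(5) diameter_ge_0[OF bB] by simp
    show "\<forall>x\<in>f ` (B \<inter> Xs i). \<forall>y\<in>f ` (B \<inter> Xs i). dist x y \<le> lam * diameter B"
    proof (intro ballI)
      fix x y assume "x \<in> f ` (B \<inter> Xs i)" "y \<in> f ` (B \<inter> Xs i)"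
      then obtain a b where ab: "a \<in> B \<inter> Xs i" "b \<in> B \<inter> Xs i" "x = f a" "y = f b" by auto
      have "dist x y \<le> lam * dist a b" using assms(6) iN ab by auto
      also have "\<dots> \<le> lam * diameter B"
        using diameter_bounded_bound[OF bB, of a b] ab assms(5) by (simp add: mult_left_mono)
      finally show "dist x y \<le> lam * diameter B" .
    qed
  qed
  finally have d1: "diameter (Fmap f Xs i B) \<le> lam * diameter B" .
  have "diameter (AF f Xs B (i # is)) = diameter (AF f Xs (Fmap f Xs i B) is)" by simp
  also have "\<dots> \<le> lam ^ length is * diameter (Fmap f Xs i B)"
    using Cons.IH[OF sub] Cons.prems by simp
  also have "\<dots> \<le> lam ^ length is * (lam * diameter B)"
    using d1 assms(5) by (simp add: mult_left_mono)
  finally show ?case by (simp add: mult_ac)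
qed simp

lemma Lambda_n_eq: "Lambda_n X f Xs N n = \<Union>((\<lambda>is. AF f Xs X is) ` {is. set is \<subseteq> {1..N} \<and> length is = n})"
  unfolding Lambda_n_def is_atom_def by auto

lemma Lambda_n_closed: "closed X \<Longrightarrow> closed (Lambda_n X f Xs N n)"
  unfolding Lambda_n_eq
  by (intro closed_Union) (auto intro: finite_lists_length_eq AF_closed)

lemma Lambda_n_sub: "closed X \<Longrightarrow> f ` X \<subseteq> X \<Longrightarrow> Lambda_n X f Xs N n \<subseteq> X"
  unfolding Lambda_n_eq using AF_sub[of X X f] by blast

lemma Lambda_n_Suc: "closed X \<Longrightarrow> f ` X \<subseteq> X \<Longrightarrow> Lambda_n X f Xs N (Suc n) \<subseteq> Lambda_n X f Xs N n"
proof
  fix x assume "closed X" "f ` X \<subseteq> X" "x \<in> Lambda_n X f Xs N (Suc n)"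
  then obtain ks where ks: "set ks \<subseteq> {1..N}" "length ks = Suc n" "x \<in> AF f Xs X ks"
    unfolding Lambda_n_eq by auto
  then obtain i js where ij: "ks = i # js" by (cases ks) auto
  have "Fmap f Xs i X \<subseteq> X" using AF_sub[of X X f Xs "[i]"] \<open>closed X\<close> \<open>f ` X \<subseteq> X\<close> by simp
  then have "x \<in> AF f Xs X js" using AF_mono[of "Fmap f Xs i X" X f Xs js] ks ij by auto
  then show "x \<in> Lambda_n X f Xs N n" unfolding Lambda_n_eq using ks ij by auto
qed

lemma Lambda_n_mono: "closed X \<Longrightarrow> f ` X \<subseteq> X \<Longrightarrow> n \<le> m \<Longrightarrow> Lambda_n X f Xs N m \<subseteq> Lambda_n X f Xs N n"
proof -
  assume a: "closed X" "f ` X \<subseteq> X" "n \<le> m"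
  from a(3) show ?thesis
    by (induction m rule: dec_induct) (use Lambda_n_Suc[OF a(1,2)] in blast)+
qed


theorem lemma1:
  fixes X :: "'a::metric_space set" and f :: "'a \<Rightarrow> 'a" and Xs :: "nat \<Rightarrow> 'a set"
    and N :: nat and lam :: real
  assumes "piecewise_contracting X f Xs N lam"
    and "disc_set X Xs N = {} \<or> setdist (attractor X f Xs N) (disc_set X Xs N) \<noteq> 0"
  shows "\<exists>n0\<ge>1. \<forall>n\<ge>n0. \<forall>A. is_atom X f Xs N n A \<longrightarrow> (\<exists>i\<in>{1..N}. A \<subseteq> Xs i)"
proof -
  define D where "D = disc_set X Xs N"
  note pc = assms(1)[unfolded piecewise_contracting_def]
  have cX: "compact X" using pc by - (elim conjE, assumption)
  have fX: "f ` X \<subseteq> X" using pc by - (elim conjE, assumption)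
  have N2: "N \<ge> 2" using pc by - (elim conjE, assumption)
  have opn: "\<forall>i\<in>{1..N}. Xs i \<noteq> {} \<and> openin (top_of_set X) (Xs i)"
    using pc by - (elim conjE, assumption)
  have lam: "0 < lam" "lam < 1" using pc by - (elim conjE, assumption)+
  have contr: "\<forall>i\<in>{1..N}. \<forall>x\<in>Xs i. \<forall>y\<in>Xs i. dist (f x) (f y) \<le> lam * dist x y"
    using pc by - (elim conjE, assumption)
  have clX: "closed X" using cX compact_imp_closed by blast
  have bX: "bounded X" using cX compact_imp_bounded by blast
  have XsX: "Xs i \<subseteq> X" if "i \<in> {1..N}" for i
    using opn that openin_imp_subset by blast
  have one: "1 \<in> {1..N}" using N2 by simp
  have Xne: "X \<noteq> {}" using opn one XsX[OF one] by blast
  have atomL: "A \<subseteq> Lambda_n X f Xs N n" if "is_atom X f Xs N n A" for n A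
    using that unfolding Lambda_n_def by blast
  obtain Y n1 where Y: "compact Y" "Y \<subseteq> X" "Y \<inter> D = {}" "n1 \<ge> 1"
    "\<And>n. n \<ge> n1 \<Longrightarrow> Lambda_n X f Xs N n \<subseteq> Y"
  proof (cases "D = {}")
    case True
    show ?thesis
      by (rule that[of X 1]) (use cX True Lambda_n_sub[OF clX fX] in auto)
  next
    case False
    define \<delta> where "\<delta> = setdist (attractor X f Xs N) D"
    have dpos: "\<delta> > 0" using assms(2) False setdist_pos_le[of "attractor X f Xs N" D]
      unfolding \<delta>_def D_def by linarith
    define W where "W = (\<Union>d\<in>D. ball d (\<delta>/2))"
    have oW: "open W" unfolding W_def by auto
    have "\<exists>n1\<ge>1. Lambda_n X f Xs N n1 \<inter> closure W = {}"
    proof (rule ccontr)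
      assume H: "\<not> ?thesis"
      have "X \<inter> (\<Inter>n\<in>{1..}. Lambda_n X f Xs N n \<inter> closure W) \<noteq> {}"
      proof (rule compact_imp_fip_image[OF cX])
        show "closed (Lambda_n X f Xs N n \<inter> closure W)" for n
          using Lambda_n_closed[OF clX] by blast
        fix I' :: "nat set" assume I': "finite I'" "I' \<subseteq> {1..}"
        show "X \<inter> (\<Inter>n\<in>I'. Lambda_n X f Xs N n \<inter> closure W) \<noteq> {}"
        proof (cases "I' = {}")
          case True then show ?thesis using Xne by simp
        next
          case False
          define m where "m = Max I'"
          have m1: "m \<ge> 1" using I' False Max_in m_def by fastforce
          obtain z where z: "z \<in> Lambda_n X f Xs N m \<inter> closure W" using H m1 by blast
          have "z \<in> Lambda_n X f Xs N n \<inter> closure W" if "n \<in> I'" for n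
            using z Lambda_n_mono[OF clX fX, of n m] that I' m_def by auto
          moreover have "z \<in> X" using z Lambda_n_sub[OF clX fX] by blast
          ultimately show ?thesis by blast
        qed
      qed
      then obtain z where z: "z \<in> X" "\<And>n. n \<ge> 1 \<Longrightarrow> z \<in> Lambda_n X f Xs N n" "z \<in> closure W"
        by auto
      have zA: "z \<in> attractor X f Xs N" unfolding attractor_def using z(2) by auto
      obtain y where y: "y \<in> W" "dist z y < \<delta>/2"
        using closure_approachableD[OF z(3), of "\<delta>/2"] dpos by auto
      then obtain d where d: "d \<in> D" "dist d y < \<delta>/2" unfolding W_def by auto
      have "dist z d < \<delta>" using y d dist_triangle[of z d y] by (simp add: dist_commute)
      moreover have "\<delta> \<le> dist z d" unfolding \<delta>_def using setdist_le_dist[OF zA d(1)] .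
      ultimately show False by simp
    qed
    then obtain n1 where n1: "n1 \<ge> 1" "Lambda_n X f Xs N n1 \<inter> closure W = {}" by blast
    show ?thesis
    proof (rule that[of "X - W" n1])
      show "compact (X - W)" using compact_diff[OF cX oW] .
      show "X - W \<subseteq> X" by blast
      have "D \<subseteq> W" unfolding W_def using dpos by force
      then show "(X - W) \<inter> D = {}" by blast
      show "n1 \<ge> 1" by fact
      fix n assume "n \<ge> n1"
      then have "Lambda_n X f Xs N n \<subseteq> Lambda_n X f Xs N n1" using Lambda_n_mono[OF clX fX] by blast
      then show "Lambda_n X f Xs N n \<subseteq> X - W"
        using n1(2) closure_subset[of W] Lambda_n_sub[OF clX fX, of Xs N n1] by blast
    qed
  qed
  define U where "U i = (SOME U. open U \<and> Xs i = X \<inter> U)" for i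
  have U: "open (U i) \<and> Xs i = X \<inter> U i" if "i \<in> {1..N}" for i
  proof -
    have "\<exists>U. open U \<and> Xs i = X \<inter> U" using opn that openin_open by blast
    then show ?thesis unfolding U_def by (rule someI_ex)
  qed
  have oUi: "open (U i)" if "i \<in> {1..N}" for i using U[OF that] by (rule conjunct1)
  have XsUe: "Xs i = X \<inter> U i" if "i \<in> {1..N}" for i using U[OF that] by (rule conjunct2)
  have XsU: "Xs i \<subseteq> U i" if "i \<in> {1..N}" for i
  proof -
    have "X \<inter> U i \<subseteq> U i" by (rule Int_lower2)
    then show ?thesis using XsUe[OF that] by simp
  qed
  have cov: "Y \<subseteq> \<Union>(U ` {1..N})"
  proof
    fix y assume "y \<in> Y"
    then have "y \<in> X" "y \<notin> D" using Y by auto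
    then obtain i where "i \<in> {1..N}" "y \<in> Xs i" unfolding D_def disc_set_def by auto
    then show "y \<in> \<Union>(U ` {1..N})" using XsU by blast
  qed
  have oU: "\<And>G. G \<in> U ` {1..N} \<Longrightarrow> open G" using oUi by auto
  obtain e where e: "0 < e" "\<And>x. x \<in> Y \<Longrightarrow> \<exists>G\<in>U ` {1..N}. ball x e \<subseteq> G"
    using Heine_Borel_lemma[OF Y(1) cov oU] by blast
  define DX where "DX = diameter X"
  have DX0: "DX \<ge> 0" unfolding DX_def using diameter_ge_0[OF bX] .
  have epos: "e / (DX + 1) > 0" using e(1) DX0 by simp
  obtain n2 where n2: "lam ^ n2 < e / (DX + 1)"
    using real_arch_pow_inv[OF epos lam(2)] by blast
  have n2': "lam ^ n2 * DX < e"
  proof -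
    have "lam ^ n2 * DX \<le> lam ^ n2 * (DX + 1)" using lam by simp
    also have "\<dots> < e" using n2 pos_less_divide_eq[of "DX + 1" "lam ^ n2" e] DX0 by simp
    finally show ?thesis .
  qed
  show ?thesis
  proof (intro exI[of _ "max n1 n2"] conjI allI impI)
    show "1 \<le> max n1 n2" using Y(4) by simp
    fix n A assume nn: "max n1 n2 \<le> n" and At: "is_atom X f Xs N n A"
    then obtain ks where ks: "length ks = n" "set ks \<subseteq> {1..N}" "A = AF f Xs X ks"
      unfolding is_atom_def by auto
    have AY: "A \<subseteq> Y" using atomL[OF At] Y(5)[of n] nn by auto
    have AX: "A \<subseteq> X" using AY Y(2) by blast
    have bA: "bounded A" using AX bX bounded_subset by blast
    have lam0: "0 \<le> lam" using lam by simp
    have "diameter A \<le> lam ^ length ks * diameter X"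
      using AF_diam[OF subset_refl bX clX fX lam0 contr ks(2)] ks(3) by simp
    also have "\<dots> = lam ^ n * DX" using ks(1) unfolding DX_def by simp
    also have "\<dots> \<le> lam ^ n2 * DX"
    proof (rule mult_right_mono[OF _ DX0])
      show "lam ^ n \<le> lam ^ n2" using power_decreasing[of n2 n lam] lam nn by simp
    qed
    finally have dA: "diameter A < e" using n2' by linarith
    show "\<exists>i\<in>{1..N}. A \<subseteq> Xs i"
    proof (cases "A = {}")
      case True then show ?thesis using N2 by auto
    next
      case False
      then obtain a where a: "a \<in> A" by blast
      have aY: "a \<in> Y" using AY a by blast
      obtain G where G: "G \<in> U ` {1..N}" "ball a e \<subseteq> G" using e(2)[OF aY] by blast
      then obtain i where i: "i \<in> {1..N}" "ball a e \<subseteq> U i" by blast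
      have "A \<subseteq> Xs i"
      proof
        fix b assume b: "b \<in> A"
        have "dist a b < e" using diameter_bounded_bound[OF bA a b] dA by linarith
        then have "b \<in> U i" using i by auto
        then have "b \<in> X \<inter> U i" using b AX by blast
        then show "b \<in> Xs i" using XsUe[OF i(1)] by simp
      qed
      then show ?thesis using i by blast
    qed
  qed
qed

end
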